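(* With $A,B,C$ as defined, set $\Sigma=B+C$. The map sending the conjugacy class of $f\in\mathrm{Rat}_2$ to $(A,\Sigma)$ (computed from either critical marking of $f$) is a well-defined bijection from $\mathcal M_2$ onto $\mathbf C^2$.
   Context: $\mathrm{Rat}_2$ is the space of holomorphic degree-$2$ maps of the Riemann sphere; $\mathcal M_2$ is the set of its Möbius conjugacy classes. Every $f\in\mathrm{Rat}_2$, together with an ordering $(\omega_1,\omega_2)$ of its two critical points, is Möbius conjugate (sending $\omega_1\mapsto0$, $\omega_2\mapsto\infty$) to a map $z\mapsto(\alpha z^2+\beta)/(\gamma z^2+\delta)$ with $\alpha\delta-\beta\gamma=1$, unique up to $(\alpha,\beta,\gamma,\delta)\mapsto(\alpha\lambda,\beta\lambda^{-3},\gamma\lambda^3,\delta\lambda^{-1})$, $\lambda\in\mathbf C\setminus\{0\}$; set $A=\alpha\delta$, $B=\alpha^3\beta$, $C=\gamma\delta^3$. Reversing the ordering of the critical points replaces $(A,B,C)$ by $(A,C,B)$. *)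

theory Defs
  imports Complex_Main "HOL-Computational_Algebra.Polynomial"
begin

text \<open>The Riemann sphere is modelled as \<open>complex option\<close>: \<open>Some z\<close> is the finite
  point z and \<open>None\<close> is the point at infinity.\<close>

type_synonym sphere = "complex option"

text \<open>Rational map z \<mapsto> p(z)/q(z) of degree d, i.e. [z:w] \<mapsto> [P(z,w):Q(z,w)] with
  P(z,w) = w^d p(z/w), Q(z,w) = w^d q(z/w); at infinity [1:0] one gets
  [coeff p d : coeff q d].\<close>

definition rat_map :: "complex poly \<Rightarrow> complex poly \<Rightarrow> nat \<Rightarrow> sphere \<Rightarrow> sphere" where
  "rat_map p q d x = (case x of
      Some z \<Rightarrow> (if poly q z = 0 then None else Some (poly p z / poly q z))
    | None \<Rightarrow> (if coeff q d = 0 then None else Some (coeff p d / coeff q d)))"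

text \<open>Admissible pair: homogeneous polynomials of degree d with no common zero
  on C^2 minus 0 (no common finite root, and not both of degree < d).\<close>

definition admissible :: "complex poly \<Rightarrow> complex poly \<Rightarrow> nat \<Rightarrow> bool" where
  "admissible p q d \<longleftrightarrow> degree p \<le> d \<and> degree q \<le> d \<and>
     (coeff p d \<noteq> 0 \<or> coeff q d \<noteq> 0) \<and> (\<forall>z. poly p z \<noteq> 0 \<or> poly q z \<noteq> 0)"

definition Rat2 :: "(sphere \<Rightarrow> sphere) set" where
  "Rat2 = {rat_map p q 2 | p q. admissible p q 2}"

definition moebius :: "(sphere \<Rightarrow> sphere) \<Rightarrow> bool" where
  "moebius \<phi> \<longleftrightarrow> (\<exists>a b c d. a * d - b * c \<noteq> 0 \<and> \<phi> = rat_map [:b, a:] [:d, c:] 1)"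

definition mconj :: "((sphere \<Rightarrow> sphere) \<times> (sphere \<Rightarrow> sphere)) set" where
  "mconj = {(f, g). f \<in> Rat2 \<and> g \<in> Rat2 \<and> (\<exists>\<phi>. moebius \<phi> \<and> g \<circ> \<phi> = \<phi> \<circ> f)}"

definition M2 :: "(sphere \<Rightarrow> sphere) set set" where
  "M2 = Rat2 // mconj"

text \<open>Normal form z \<mapsto> (\<alpha> z^2 + \<beta>)/(\<gamma> z^2 + \<delta>); its critical points are 0 and \<infinity>.\<close>

definition normal_form :: "complex \<Rightarrow> complex \<Rightarrow> complex \<Rightarrow> complex \<Rightarrow> sphere \<Rightarrow> sphere" where
  "normal_form \<alpha> \<beta> \<gamma> \<delta> = rat_map [:\<beta>, 0, \<alpha>:] [:\<delta>, 0, \<gamma>:] 2"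

text \<open>\<open>AS_value f a s\<close>: (a, s) = (A, B + C) is obtained from some critical marking of f,
  i.e. from some Moebius \<phi> (sending the critical points of f to 0 and \<infinity>, in either order)
  conjugating f to a normal form with \<alpha>\<delta> - \<beta>\<gamma> = 1, where A = \<alpha>\<delta>, B = \<alpha>^3\<beta>, C = \<gamma>\<delta>^3.\<close>

definition AS_value :: "(sphere \<Rightarrow> sphere) \<Rightarrow> complex \<Rightarrow> complex \<Rightarrow> bool" where
  "AS_value f a s \<longleftrightarrow> (\<exists>\<phi> \<alpha> \<beta> \<gamma> \<delta>. moebius \<phi> \<and> \<alpha> * \<delta> - \<beta> * \<gamma> = 1 \<and>
      \<phi> \<circ> f = normal_form \<alpha> \<beta> \<gamma> \<delta> \<circ> \<phi> \<and>
      a = \<alpha> * \<delta> \<and> s = \<alpha> ^ 3 * \<beta> + \<gamma> * \<delta> ^ 3)"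

end

theory Submission
  imports Defs
begin


definition proj :: "complex \<Rightarrow> complex \<Rightarrow> sphere" where
  "proj x y = (if y = 0 then None else Some (x / y))"

lemma proj_scale: "k \<noteq> 0 \<Longrightarrow> proj (k*x) (k*y) = proj x y"
  by (simp add: proj_def)

lemma proj_eq_iff:
  assumes "x \<noteq> 0 \<or> y \<noteq> 0" "x' \<noteq> 0 \<or> y' \<noteq> 0"
  shows "proj x y = proj x' y' \<longleftrightarrow> x * y' = x' * y"
  using assms by (auto simp: proj_def field_simps)

lemma proj_surj: "\<exists>x y. (x \<noteq> 0 \<or> y \<noteq> 0) \<and> P = proj x y"
proof (cases P)
  case None then show ?thesis by (intro exI[of _ 1] exI[of _ 0]) (simp add: proj_def)
next
  case (Some z) then show ?thesis by (intro exI[of _ z] exI[of _ 1]) (simp add: proj_def)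
qed

lemma sphere_ext:
  assumes "\<And>x y. x \<noteq> 0 \<or> y \<noteq> 0 \<Longrightarrow> F (proj x y) = G (proj x y)"
  shows "F = G"
proof
  fix P show "F P = G P" using proj_surj[of P] assms by auto
qed

lemma poly2:
  fixes p :: "complex poly"
  assumes "degree p \<le> 2"
  shows "poly p z = coeff p 0 + coeff p 1 * z + coeff p 2 * z^2"
proof -
  have "poly p z = (\<Sum>i\<le>degree p. coeff p i * z ^ i)" by (rule poly_altdef)
  also have "\<dots> = (\<Sum>i\<le>2. coeff p i * z ^ i)"
    by (rule sum.mono_neutral_left) (use assms in \<open>auto simp: coeff_eq_0\<close>)
  also have "\<dots> = coeff p 0 + coeff p 1 * z + coeff p 2 * z^2"
    by (simp add: numeral_2_eq_2)
  finally show ?thesis .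
qed

definition hP :: "complex poly \<Rightarrow> complex \<Rightarrow> complex \<Rightarrow> complex" where
  "hP p x y = coeff p 2 * x^2 + coeff p 1 * x * y + coeff p 0 * y^2"

lemma rat2_proj:
  assumes "degree p \<le> 2" "degree q \<le> 2" "x \<noteq> 0 \<or> y \<noteq> 0"
  shows "rat_map p q 2 (proj x y) = proj (hP p x y) (hP q x y)"
proof (cases "y = 0")
  case True
  then show ?thesis using assms by (simp add: rat_map_def proj_def hP_def)
next
  case False
  have e: "hP r x y = y^2 * poly r (x/y)" if "degree r \<le> 2" for r
    using that False by (simp add: poly2 hP_def field_simps power2_eq_square)
  show ?thesis using False e[OF assms(1)] e[OF assms(2)]
    by (simp add: rat_map_def proj_def)
qed

lemma mob_proj:
  assumes "x \<noteq> 0 \<or> y \<noteq> 0"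
  shows "rat_map [:b,a:] [:d,c:] 1 (proj x y) = proj (a*x+b*y) (c*x+d*y)"
proof (cases "y = 0")
  case True
  then show ?thesis using assms by (simp add: rat_map_def proj_def)
next
  case False
  have "c * x + d * y = y * (d + c * (x/y))" "a*x+b*y = y * (b + a*(x/y))" using False by (simp_all add: field_simps)
  then show ?thesis using False by (simp add: rat_map_def proj_def ac_simps)
qed



definition mob :: "complex \<Rightarrow> complex \<Rightarrow> complex \<Rightarrow> complex \<Rightarrow> sphere \<Rightarrow> sphere" where
  "mob a b c d = rat_map [:b,a:] [:d,c:] 1"

lemma moebius_mob: "moebius \<phi> \<longleftrightarrow> (\<exists>a b c d. a*d - b*c \<noteq> 0 \<and> \<phi> = mob a b c d)"
  by (simp add: moebius_def mob_def)

lemma nz_vec: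
  fixes a b c d x y :: complex
  assumes "a*d - b*c \<noteq> 0" "x \<noteq> 0 \<or> y \<noteq> 0"
  shows "a*x+b*y \<noteq> 0 \<or> c*x+d*y \<noteq> 0"
proof (rule ccontr)
  assume "\<not> ?thesis"
  then have h: "a*x+b*y = 0" "c*x+d*y = 0" by auto
  have "(a*d - b*c) * x = d*(a*x+b*y) - b*(c*x+d*y)" by (simp add: algebra_simps)
  moreover have "(a*d - b*c) * y = a*(c*x+d*y) - c*(a*x+b*y)" by (simp add: algebra_simps)
  ultimately show False using h assms by auto
qed

lemma mob_proj': "x \<noteq> 0 \<or> y \<noteq> 0 \<Longrightarrow> mob a b c d (proj x y) = proj (a*x+b*y) (c*x+d*y)"
  unfolding mob_def by (rule mob_proj)

lemma mob_comp:
  assumes "a'*d' - b'*c' \<noteq> 0"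
  shows "mob a b c d \<circ> mob a' b' c' d' = mob (a*a'+b*c') (a*b'+b*d') (c*a'+d*c') (c*b'+d*d')"
proof (rule sphere_ext)
  fix x y :: complex assume nz: "x \<noteq> 0 \<or> y \<noteq> 0"
  have nz2: "a'*x+b'*y \<noteq> 0 \<or> c'*x+d'*y \<noteq> 0" by (rule nz_vec[OF assms nz])
  show "(mob a b c d \<circ> mob a' b' c' d') (proj x y) = mob (a*a'+b*c') (a*b'+b*d') (c*a'+d*c') (c*b'+d*d') (proj x y)"
    using nz nz2 by (simp add: mob_proj' algebra_simps)
qed

lemma mob_inv:
  assumes "a*d - b*c \<noteq> 0"
  shows "mob d (-b) (-c) a \<circ> mob a b c d = id"
proof -
  have "mob d (-b) (-c) a \<circ> mob a b c d = mob (a*d-b*c) 0 0 (a*d-b*c)"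
    by (subst mob_comp[OF assms]) (simp add: algebra_simps)
  also have "\<dots> = id"
  proof (rule sphere_ext)
    fix x y :: complex assume nz: "x \<noteq> 0 \<or> y \<noteq> 0"
    show "mob (a*d-b*c) 0 0 (a*d-b*c) (proj x y) = id (proj x y)"
      using nz assms by (simp add: mob_proj' proj_scale)
  qed
  finally show ?thesis .
qed

lemma moebius_comp: "moebius \<phi> \<Longrightarrow> moebius \<psi> \<Longrightarrow> moebius (\<phi> \<circ> \<psi>)"
proof -
  assume "moebius \<phi>" "moebius \<psi>"
  then obtain a b c d a' b' c' d' where h: "a*d-b*c \<noteq> 0" "\<phi> = mob a b c d"
    "a'*d'-b'*c' \<noteq> 0" "\<psi> = mob a' b' c' d'" by (auto simp: moebius_mob)
  have "(a*a'+b*c')*(c*b'+d*d') - (a*b'+b*d')*(c*a'+d*c') = (a*d-b*c)*(a'*d'-b'*c')"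
    by (simp add: algebra_simps)
  then show ?thesis using h mob_comp[OF h(3)] unfolding moebius_mob by (metis mult_eq_0_iff)
qed

lemma moebius_inv:
  assumes "moebius \<phi>"
  shows "\<exists>\<phi>'. moebius \<phi>' \<and> \<phi>' \<circ> \<phi> = id \<and> \<phi> \<circ> \<phi>' = id"
proof -
  obtain a b c d where h: "a*d-b*c \<noteq> 0" "\<phi> = mob a b c d" using assms by (auto simp: moebius_mob)
  have h2: "d*a - (-b)*(-c) \<noteq> 0" using h by (simp add: algebra_simps)
  have "mob a b c d \<circ> mob d (-b) (-c) a = id"
    using mob_inv[OF h2] by simp
  moreover have "moebius (mob d (-b) (-c) a)" using h2 unfolding moebius_mob by blast
  ultimately show ?thesis using mob_inv[OF h(1)] h(2) by blast
qed

lemma moebius_id: "moebius id"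
proof -
  have "mob 1 0 0 1 = id"
  proof (rule sphere_ext)
    fix x y :: complex assume nz: "x \<noteq> 0 \<or> y \<noteq> 0"
    show "mob 1 0 0 1 (proj x y) = id (proj x y)" by (simp add: mob_proj'[OF nz])
  qed
  then show ?thesis unfolding moebius_mob by (metis mult_1 mult_zero_left diff_zero one_neq_zero)
qed

lemma moebius_bij: "moebius \<phi> \<Longrightarrow> bij \<phi>"
  using moebius_inv by (metis o_bij)

lemma coeff3_2[simp]: "coeff [:a,b,c:] 2 = c" "coeff [:a:] 2 = 0" "coeff [:a,b:] 2 = 0"
  by (simp_all add: numeral_2_eq_2)

lemma nf_proj:
  assumes "x \<noteq> 0 \<or> y \<noteq> 0"
  shows "normal_form \<alpha> \<beta> \<gamma> \<delta> (proj x y) = proj (\<alpha>*x^2 + \<beta>*y^2) (\<gamma>*x^2+\<delta>*y^2)"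
  unfolding normal_form_def using assms
  by (subst rat2_proj) (auto simp: hP_def degree_pCons_eq_if)

definition sq :: "sphere \<Rightarrow> sphere" where "sq = map_option (\<lambda>z. z^2)"

lemma nf_sq: "normal_form \<alpha> \<beta> \<gamma> \<delta> = mob \<alpha> \<beta> \<gamma> \<delta> \<circ> sq"
proof
  fix P show "normal_form \<alpha> \<beta> \<gamma> \<delta> P = (mob \<alpha> \<beta> \<gamma> \<delta> \<circ> sq) P"
    by (cases P) (auto simp: normal_form_def mob_def rat_map_def sq_def power2_eq_square ac_simps)
qed

definition crit :: "(sphere \<Rightarrow> sphere) \<Rightarrow> sphere \<Rightarrow> bool" where
  "crit f x \<longleftrightarrow> (\<forall>y. f y = f x \<longrightarrow> y = x)"

lemma crit_sq: "crit sq x \<longleftrightarrow> x = Some 0 \<or> x = None"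
proof (cases x)
  case None
  then show ?thesis by (auto simp: crit_def sq_def)
next
  case (Some z)
  show ?thesis
  proof
    assume c: "crit sq x"
    have "sq (Some (-z)) = sq x" using Some by (simp add: sq_def)
    then have "Some (-z) = x" using c by (simp add: crit_def)
    then show "x = Some 0 \<or> x = None" using Some by simp
  next
    assume "x = Some 0 \<or> x = None"
    then show "crit sq x" using Some by (auto simp: crit_def sq_def split: option.splits)
  qed
qed

lemma crit_nf:
  assumes "\<alpha>*\<delta> - \<beta>*\<gamma> \<noteq> 0"
  shows "crit (normal_form \<alpha> \<beta> \<gamma> \<delta>) x \<longleftrightarrow> x = Some 0 \<or> x = None"
proof -
  have "inj (mob \<alpha> \<beta> \<gamma> \<delta>)" using moebius_bij assms unfolding moebius_mob bij_def by blast
  then have "crit (normal_form \<alpha> \<beta> \<gamma> \<delta>) x = crit sq x"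
    unfolding nf_sq crit_def by (auto dest: injD)
  then show ?thesis by (simp add: crit_sq)
qed

lemma crit_conj:
  assumes "bij \<psi>" "\<psi> \<circ> f = g \<circ> \<psi>" "crit f x"
  shows "crit g (\<psi> x)"
  unfolding crit_def
proof (intro allI impI)
  fix y assume y: "g y = g (\<psi> x)"
  obtain y' where y': "y = \<psi> y'" using assms(1) by (metis bij_pointE)
  have "\<psi> (f y') = \<psi> (f x)" using y y' assms(2) by (metis comp_apply)
  then have "f y' = f x" using assms(1) by (simp add: bij_def inj_eq)
  then have "y' = x" using assms(3) by (simp add: crit_def)
  then show "y = \<psi> x" using y' by simp
qed



lemma prop_lemma:
  fixes a b c d a' b' c' d' :: complex
  assumes id: "\<And>u v. (a*u+b*v)*(c'*u+d'*v) = (a'*u+b'*v)*(c*u+d*v)"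
    and det: "a*d - b*c \<noteq> 0"
  shows "\<exists>\<mu>. a' = \<mu>*a \<and> b' = \<mu>*b \<and> c' = \<mu>*c \<and> d' = \<mu>*d"
proof -
  have e1: "(a*d - b*c) * (c'*d - d'*c) = 0" using id[of d "-c"] by (simp add: algebra_simps)
  have e2: "(a'*b - b'*a) * (c*b - d*a) = 0"
  proof -
    have "(a*b+b*(-a))*(c'*b+d'*(-a)) = (a'*b+b'*(-a))*(c*b+d*(-a))" by (rule id)
    then show ?thesis by (simp add: algebra_simps)
  qed
  have f1: "c'*d = d'*c" using e1 det by simp
  have "c*b - d*a \<noteq> 0" using det by (simp add: algebra_simps)
  then have f2: "a'*b = b'*a" using e2 by simp
  have g1: "a*c' = a'*c" using id[of 1 0] by simp
  have g2: "b*d' = b'*d" using id[of 0 1] by simp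
  have g3: "a*d' + b*c' = a'*d + b'*c" using id[of 1 1] g1 g2 by (simp add: algebra_simps)
  obtain \<mu> where m: "a' = \<mu>*a" "b' = \<mu>*b"
  proof (cases "a = 0")
    case True
    then have "b \<noteq> 0" using det by auto
    then have "a' = 0" using f2 True by simp
    then show ?thesis using that[of "b'/b"] True \<open>b \<noteq> 0\<close> by simp
  next
    case False
    then show ?thesis using that[of "a'/a"] f2 by (simp add: field_simps)
  qed
  obtain \<nu> where n: "c' = \<nu>*c" "d' = \<nu>*d"
  proof (cases "c = 0")
    case True
    then have "d \<noteq> 0" using det by auto
    then have "c' = 0" using f1 True by simp
    then show ?thesis using that[of "d'/d"] True \<open>d \<noteq> 0\<close> by simp
  next
    case False
    then show ?thesis using that[of "c'/c"] f1 by (simp add: field_simps)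
  qed
  have h1: "(\<nu> - \<mu>) * (a*c) = 0" using g1 m n by (simp add: algebra_simps)
  have h2: "(\<nu> - \<mu>) * (b*d) = 0" using g2 m n by (simp add: algebra_simps)
  have h3: "(\<nu> - \<mu>) * (a*d + b*c) = 0" using g3 m n by (simp add: algebra_simps)
  have "\<nu> = \<mu>"
  proof (rule ccontr)
    assume "\<nu> \<noteq> \<mu>"
    then have "a*c = 0" "b*d = 0" "a*d+b*c = 0" using h1 h2 h3 by auto
    then show False using det by (auto simp: algebra_simps)
  qed
  then show ?thesis using m n by blast
qed

lemma proj_cross:
  assumes "proj x y = proj x' y'" "x \<noteq> 0 \<or> y \<noteq> 0" "x' \<noteq> 0 \<or> y' \<noteq> 0"
  shows "x * y' = x' * y"
  using proj_eq_iff[OF assms(2,3)] assms(1) by simp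

lemma nz_sq: "(x::complex) \<noteq> 0 \<or> (y::complex) \<noteq> 0 \<Longrightarrow> x^2 \<noteq> 0 \<or> y^2 \<noteq> 0" by auto

lemma uniq_core:
  fixes a0 d0 \<alpha>1 \<beta>1 \<gamma>1 \<delta>1 \<alpha>2 \<beta>2 \<gamma>2 \<delta>2 :: complex
  assumes a0: "a0 \<noteq> 0" and d0: "d0 \<noteq> 0"
    and cj: "mob a0 0 0 d0 \<circ> normal_form \<alpha>1 \<beta>1 \<gamma>1 \<delta>1 = normal_form \<alpha>2 \<beta>2 \<gamma>2 \<delta>2 \<circ> mob a0 0 0 d0"
    and det1: "\<alpha>1*\<delta>1 - \<beta>1*\<gamma>1 = 1" and det2: "\<alpha>2*\<delta>2 - \<beta>2*\<gamma>2 = 1"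
  shows "\<alpha>2*\<delta>2 = \<alpha>1*\<delta>1 \<and> \<alpha>2^3*\<beta>2 = \<alpha>1^3*\<beta>1 \<and> \<gamma>2*\<delta>2^3 = \<gamma>1*\<delta>1^3"
proof -
  have idxy: "(a0*(\<alpha>1*x^2+\<beta>1*y^2)) * ((\<gamma>2*a0^2)*x^2 + (\<delta>2*d0^2)*y^2)
     = ((\<alpha>2*a0^2)*x^2 + (\<beta>2*d0^2)*y^2) * (d0*(\<gamma>1*x^2+\<delta>1*y^2))" for x y :: complex
  proof (cases "x = 0 \<and> y = 0")
    case True then show ?thesis by simp
  next
    case False
    then have nz: "x \<noteq> 0 \<or> y \<noteq> 0" by auto
    have nz1: "\<alpha>1*x^2+\<beta>1*y^2 \<noteq> 0 \<or> \<gamma>1*x^2+\<delta>1*y^2 \<noteq> 0"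
      using nz_vec[of \<alpha>1 \<delta>1 \<beta>1 \<gamma>1, OF _ nz_sq[OF nz]] det1 by simp
    have nzA: "a0*(\<alpha>1*x^2+\<beta>1*y^2) \<noteq> 0 \<or> d0*(\<gamma>1*x^2+\<delta>1*y^2) \<noteq> 0"
      using nz1 a0 d0 by auto
    have nzx: "a0*x \<noteq> 0 \<or> d0*y \<noteq> 0" using nz a0 d0 by auto
    have nz2: "\<alpha>2*(a0*x)^2+\<beta>2*(d0*y)^2 \<noteq> 0 \<or> \<gamma>2*(a0*x)^2+\<delta>2*(d0*y)^2 \<noteq> 0"
      using nz_vec[of \<alpha>2 \<delta>2 \<beta>2 \<gamma>2, OF _ nz_sq[OF nzx]] det2 by simp
    have "(mob a0 0 0 d0 \<circ> normal_form \<alpha>1 \<beta>1 \<gamma>1 \<delta>1) (proj x y)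
        = (normal_form \<alpha>2 \<beta>2 \<gamma>2 \<delta>2 \<circ> mob a0 0 0 d0) (proj x y)" using cj by simp
    then have "proj (a0*(\<alpha>1*x^2+\<beta>1*y^2)) (d0*(\<gamma>1*x^2+\<delta>1*y^2))
       = proj (\<alpha>2*(a0*x)^2+\<beta>2*(d0*y)^2) (\<gamma>2*(a0*x)^2+\<delta>2*(d0*y)^2)"
      using nz nz1 nzx by (simp add: nf_proj mob_proj')
    from proj_cross[OF this nzA nz2] show ?thesis by (simp add: algebra_simps power_mult_distrib)
  qed
  have iduv: "(a0*\<alpha>1*u+a0*\<beta>1*v)*((\<gamma>2*a0^2)*u+(\<delta>2*d0^2)*v) = ((\<alpha>2*a0^2)*u+(\<beta>2*d0^2)*v)*(d0*\<gamma>1*u+d0*\<delta>1*v)" for u v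
    using idxy[of "csqrt u" "csqrt v"] by (simp add: algebra_simps)
  have dt: "(a0*\<alpha>1)*(d0*\<delta>1) - (a0*\<beta>1)*(d0*\<gamma>1) \<noteq> 0"
  proof -
    have "(a0*\<alpha>1)*(d0*\<delta>1) - (a0*\<beta>1)*(d0*\<gamma>1) = a0*d0*(\<alpha>1*\<delta>1 - \<beta>1*\<gamma>1)" by (simp add: algebra_simps)
    then show ?thesis using a0 d0 det1 by simp
  qed
  obtain \<mu> where m: "\<alpha>2*a0^2 = \<mu>*(a0*\<alpha>1)" "\<beta>2*d0^2 = \<mu>*(a0*\<beta>1)" "\<gamma>2*a0^2 = \<mu>*(d0*\<gamma>1)" "\<delta>2*d0^2 = \<mu>*(d0*\<delta>1)"
    using prop_lemma[OF iduv dt] by blast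
  have "(\<alpha>2*a0^2)*(\<delta>2*d0^2) - (\<beta>2*d0^2)*(\<gamma>2*a0^2) = a0^2*d0^2*(\<alpha>2*\<delta>2 - \<beta>2*\<gamma>2)" by (simp add: algebra_simps)
  also have "\<dots> = a0^2*d0^2" using det2 by simp
  also have "(\<alpha>2*a0^2)*(\<delta>2*d0^2) - (\<beta>2*d0^2)*(\<gamma>2*a0^2) = \<mu>^2*(a0*d0)*(\<alpha>1*\<delta>1 - \<beta>1*\<gamma>1)"
    unfolding m by (simp add: algebra_simps power2_eq_square)
  also have "\<dots> = \<mu>^2*(a0*d0)" using det1 by simp
  finally have mu2: "\<mu>^2 = a0*d0" using a0 d0 by (simp add: power2_eq_square)
  have "a0^2*d0^2*(\<alpha>2*\<delta>2) = (\<alpha>2*a0^2)*(\<delta>2*d0^2)" by (simp add: algebra_simps)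
  also have "\<dots> = \<mu>^2*a0*d0*(\<alpha>1*\<delta>1)" unfolding m by (simp add: algebra_simps power2_eq_square)
  also have "\<dots> = a0^2*d0^2*(\<alpha>1*\<delta>1)" unfolding mu2 by (simp add: algebra_simps power2_eq_square)
  finally have r1: "\<alpha>2*\<delta>2 = \<alpha>1*\<delta>1" using a0 d0 by simp
  have "a0^6*d0^2*(\<alpha>2^3*\<beta>2) = (\<alpha>2*a0^2)^3*(\<beta>2*d0^2)" by (simp add: algebra_simps power_mult_distrib eval_nat_numeral)
  also have "\<dots> = (\<mu>^2)^2*a0^4*(\<alpha>1^3*\<beta>1)" unfolding m by (simp add: algebra_simps eval_nat_numeral)
  also have "\<dots> = a0^6*d0^2*(\<alpha>1^3*\<beta>1)" unfolding mu2 by (simp add: algebra_simps eval_nat_numeral)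
  finally have r2: "\<alpha>2^3*\<beta>2 = \<alpha>1^3*\<beta>1" using a0 d0 by simp
  have "a0^2*d0^6*(\<gamma>2*\<delta>2^3) = (\<gamma>2*a0^2)*(\<delta>2*d0^2)^3" by (simp add: algebra_simps power_mult_distrib eval_nat_numeral)
  also have "\<dots> = (\<mu>^2)^2*d0^4*(\<gamma>1*\<delta>1^3)" unfolding m by (simp add: algebra_simps eval_nat_numeral)
  also have "\<dots> = a0^2*d0^6*(\<gamma>1*\<delta>1^3)" unfolding mu2 by (simp add: algebra_simps eval_nat_numeral)
  finally have r3: "\<gamma>2*\<delta>2^3 = \<gamma>1*\<delta>1^3" using a0 d0 by simp
  show ?thesis using r1 r2 r3 by simp
qed

lemma conj_scale:
  fixes l :: complex
  assumes l: "l \<noteq> 0" and det1: "\<alpha>1*\<delta>1 - \<beta>1*\<gamma>1 = 1"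
    and h: "\<alpha>2 = \<alpha>1*l" "\<beta>2*l^3 = \<beta>1" "\<gamma>2 = \<gamma>1*l^3" "\<delta>2*l = \<delta>1"
  shows "mob 1 0 0 (l^2) \<circ> normal_form \<alpha>1 \<beta>1 \<gamma>1 \<delta>1 = normal_form \<alpha>2 \<beta>2 \<gamma>2 \<delta>2 \<circ> mob 1 0 0 (l^2)"
proof (rule sphere_ext)
  fix x y :: complex assume nz: "x \<noteq> 0 \<or> y \<noteq> 0"
  have nzx: "x \<noteq> 0 \<or> l^2*y \<noteq> 0" using nz l by auto
  have e: "\<alpha>2*x^2 + \<beta>2*(l^2*y)^2 = l*(\<alpha>1*x^2+\<beta>1*y^2)"
          "\<gamma>2*x^2 + \<delta>2*(l^2*y)^2 = l*(l^2*(\<gamma>1*x^2+\<delta>1*y^2))"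
    by (simp_all add: h(1,3) h(2)[symmetric] h(4)[symmetric] algebra_simps power_mult_distrib eval_nat_numeral)
  show "(mob 1 0 0 (l^2) \<circ> normal_form \<alpha>1 \<beta>1 \<gamma>1 \<delta>1) (proj x y) = (normal_form \<alpha>2 \<beta>2 \<gamma>2 \<delta>2 \<circ> mob 1 0 0 (l^2)) (proj x y)"
    using nz nzx l
    apply (simp add: nf_proj mob_proj')
    apply (subst mob_proj')
    apply (metis nz_sq nz_vec det1 one_neq_zero)
    apply (simp add: e proj_scale)
    done
qed

lemma conj_swap:
  assumes det: "\<alpha>*\<delta> - \<beta>*\<gamma> \<noteq> 0"
  shows "mob 0 1 1 0 \<circ> normal_form \<alpha> \<beta> \<gamma> \<delta> = normal_form \<delta> \<gamma> \<beta> \<alpha> \<circ> mob 0 1 1 0"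
proof (rule sphere_ext)
  fix x y :: complex assume nz: "x \<noteq> 0 \<or> y \<noteq> 0"
  have nz': "y \<noteq> 0 \<or> x \<noteq> 0" using nz by auto
  show "(mob 0 1 1 0 \<circ> normal_form \<alpha> \<beta> \<gamma> \<delta>) (proj x y) = (normal_form \<delta> \<gamma> \<beta> \<alpha> \<circ> mob 0 1 1 0) (proj x y)"
    using nz nz' nz_vec[OF det nz_sq[OF nz]] by (simp add: nf_proj mob_proj' add.commute)
qed



lemma cube_root: "\<exists>l::complex. l^3 = c"
proof -
  have "(rcis (root 3 (cmod c)) (Arg c / 3))^3 = rcis (root 3 (cmod c) ^ 3) (real 3 * (Arg c / 3))"
    by (rule DeMoivre2)
  also have "\<dots> = c" by (simp add: rcis_cmod_Arg)
  finally show ?thesis by blast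
qed

lemma scale_exists:
  fixes \<alpha>1 \<beta>1 \<gamma>1 \<delta>1 \<alpha>2 \<beta>2 \<gamma>2 \<delta>2 :: complex
  assumes det1: "\<alpha>1*\<delta>1 - \<beta>1*\<gamma>1 = 1" and det2: "\<alpha>2*\<delta>2 - \<beta>2*\<gamma>2 = 1"
    and A: "\<alpha>2*\<delta>2 = \<alpha>1*\<delta>1" and B: "\<alpha>2^3*\<beta>2 = \<alpha>1^3*\<beta>1" and C: "\<gamma>2*\<delta>2^3 = \<gamma>1*\<delta>1^3"
  shows "\<exists>l. l \<noteq> 0 \<and> \<alpha>2 = \<alpha>1*l \<and> \<beta>2*l^3 = \<beta>1 \<and> \<gamma>2 = \<gamma>1*l^3 \<and> \<delta>2*l = \<delta>1"
proof -
  have bg: "\<beta>2*\<gamma>2 = \<beta>1*\<gamma>1" using det1 det2 A by (simp add: algebra_simps)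
  have a12: "\<alpha>1 = 0 \<longleftrightarrow> \<alpha>2 = 0"
  proof
    assume "\<alpha>1 = 0"
    then have "\<alpha>2*\<delta>2 = 0" "\<alpha>2^3*\<beta>2 = 0" using A B by auto
    then show "\<alpha>2 = 0" using det2 by auto
  next
    assume "\<alpha>2 = 0"
    then have "\<alpha>1*\<delta>1 = 0" "\<alpha>1^3*\<beta>1 = 0" using A B by auto
    then show "\<alpha>1 = 0" using det1 by auto
  qed
  show ?thesis
  proof (cases "\<alpha>1 = 0")
    case False
    then have a2: "\<alpha>2 \<noteq> 0" using a12 by simp
    define l where "l = \<alpha>2/\<alpha>1"
    have l0: "l \<noteq> 0" using False a2 by (simp add: l_def)
    have h1: "\<alpha>2 = \<alpha>1*l" using False by (simp add: l_def)
    have h4: "\<delta>2*l = \<delta>1"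
    proof -
      have "\<alpha>1*(\<delta>2*l) = \<alpha>1*\<delta>1" using A h1 by (simp add: algebra_simps)
      then show ?thesis using False by simp
    qed
    have h2: "\<beta>2*l^3 = \<beta>1"
    proof -
      have "\<alpha>1^3*(\<beta>2*l^3) = \<alpha>1^3*\<beta>1" using B h1 by (simp add: algebra_simps power_mult_distrib)
      then show ?thesis using False by simp
    qed
    have h3: "\<gamma>2 = \<gamma>1*l^3"
    proof (cases "\<beta>1 = 0")
      case False
      then have "\<beta>2 \<noteq> 0" using h2 by auto
      moreover have "\<beta>2*\<gamma>2 = \<beta>2*(\<gamma>1*l^3)" using bg h2 by (simp add: algebra_simps)
      ultimately show ?thesis by simp
    next
      case True
      then have "\<alpha>1*\<delta>1 = 1" using det1 by simp
      then have d1: "\<delta>1 \<noteq> 0" by auto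
      then have d2: "\<delta>2 \<noteq> 0" using h4 by auto
      have "\<delta>2^3*\<gamma>2 = \<delta>2^3*(\<gamma>1*l^3)" using C h4[symmetric] by (simp add: algebra_simps power_mult_distrib)
      then show ?thesis using d2 by simp
    qed
    show ?thesis using l0 h1 h2 h3 h4 by blast
  next
    case True
    then have a2: "\<alpha>2 = 0" using a12 by simp
    have "\<beta>1*\<gamma>1 = \<alpha>1*\<delta>1 - 1" by (simp add: det1[symmetric])
    then have bg1: "\<beta>1*\<gamma>1 = -1" using True by simp
    then have g1: "\<gamma>1 \<noteq> 0" by auto
    show ?thesis
    proof (cases "\<delta>1 = 0")
      case False
      then have "\<gamma>1*\<delta>1^3 \<noteq> 0" using g1 by simp
      then have d2: "\<delta>2 \<noteq> 0" using C by auto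
      define l where "l = \<delta>1/\<delta>2"
      have l0: "l \<noteq> 0" using False d2 by (simp add: l_def)
      have h4: "\<delta>2*l = \<delta>1" using d2 by (simp add: l_def)
      have h3: "\<gamma>2 = \<gamma>1*l^3"
      proof -
        have "\<delta>2^3*\<gamma>2 = \<delta>2^3*(\<gamma>1*l^3)" using C h4[symmetric] by (simp add: algebra_simps power_mult_distrib)
        then show ?thesis using d2 by simp
      qed
      have h2: "\<beta>2*l^3 = \<beta>1"
      proof -
        have "\<gamma>1*(\<beta>2*l^3) = \<beta>2*(\<gamma>1*l^3)" by (simp only: ac_simps)
        also have "\<dots> = \<beta>2*\<gamma>2" by (simp only: h3)
        also have "\<dots> = \<gamma>1*\<beta>1" by (simp only: bg ac_simps)
        finally show ?thesis using g1 by simp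
      qed
      show ?thesis using l0 h2 h3 h4 True a2 by auto
    next
      case d1: True
      have "\<beta>2*\<gamma>2 = \<alpha>2*\<delta>2 - 1" by (simp add: det2[symmetric])
      then have g2: "\<gamma>2 \<noteq> 0" using a2 by auto
      have d2: "\<delta>2 = 0" using C g1 g2 d1 by simp
      obtain l where l: "l^3 = \<gamma>2/\<gamma>1" using cube_root by blast
      have l0: "l \<noteq> 0" using l g2 g1 by auto
      have h3: "\<gamma>2 = \<gamma>1*l^3" using l g1 by simp
      have h2: "\<beta>2*l^3 = \<beta>1"
      proof -
        have "\<gamma>1*(\<beta>2*l^3) = \<beta>2*(\<gamma>1*l^3)" by (simp only: ac_simps)
        also have "\<dots> = \<beta>2*\<gamma>2" by (simp only: h3)
        also have "\<dots> = \<gamma>1*\<beta>1" by (simp only: bg ac_simps)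
        finally show ?thesis using g1 by simp
      qed
      show ?thesis using l0 h2 h3 d1 d2 True a2 by auto
    qed
  qed
qed

lemma BC_prod:
  fixes \<alpha> \<beta> \<gamma> \<delta> :: complex
  assumes "\<alpha>*\<delta> - \<beta>*\<gamma> = 1"
  shows "(\<alpha>^3*\<beta>)*(\<gamma>*\<delta>^3) = (\<alpha>*\<delta>)^3*(\<alpha>*\<delta> - 1)"
proof -
  have "\<beta>*\<gamma> = \<alpha>*\<delta> - 1" by (simp add: assms[symmetric])
  have "(\<alpha>^3*\<beta>)*(\<gamma>*\<delta>^3) = (\<alpha>*\<delta>)^3*(\<beta>*\<gamma>)" by (simp add: power_mult_distrib ac_simps)
  then show ?thesis using \<open>\<beta>*\<gamma> = \<alpha>*\<delta> - 1\<close> by simp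
qed

lemma sym_pair:
  fixes B1 C1 B2 C2 :: complex
  assumes "B1 + C1 = B2 + C2" "B1*C1 = B2*C2"
  shows "(B2 = B1 \<and> C2 = C1) \<or> (B2 = C1 \<and> C2 = B1)"
proof -
  have "(B2 - B1)*(B2 - C1) = 0"
  proof -
    have "(B2 - B1)*(B2 - C1) = B2*B2 - B2*(B1+C1) + B1*C1" by (simp add: algebra_simps)
    also have "\<dots> = 0" using assms by (simp add: algebra_simps)
    finally show ?thesis .
  qed
  then have "B2 = B1 \<or> B2 = C1" by simp
  then show ?thesis
  proof
    assume "B2 = B1" then show ?thesis using assms(1) by simp
  next
    assume h: "B2 = C1"
    have "C2 = (B1 + C1) - B2" using assms(1) by simp
    then show ?thesis using h by simp
  qed
qed



lemma moebius_scale: "l \<noteq> 0 \<Longrightarrow> moebius (mob 1 0 0 (l^2))"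
  unfolding moebius_mob by (rule exI[of _ 1], rule exI[of _ 0], rule exI[of _ 0], rule exI[of _ "l^2"]) simp

lemma moebius_sw: "moebius (mob 0 1 1 0)"
  unfolding moebius_mob by (rule exI[of _ 0], rule exI[of _ 1], rule exI[of _ 1], rule exI[of _ 0]) simp

lemma mob_id: "mob 1 0 0 1 = id"
proof (rule sphere_ext)
  fix x y :: complex assume nz: "x \<noteq> 0 \<or> y \<noteq> 0"
  show "mob 1 0 0 1 (proj x y) = id (proj x y)" by (simp add: mob_proj'[OF nz])
qed

lemma sw_sw: "mob 0 1 1 0 \<circ> mob 0 1 1 0 = id"
  by (subst mob_comp) (simp_all add: mob_id)

lemma sw_swp: "mob 0 1 1 0 (mob 0 1 1 0 x) = x"
  using sw_sw by (metis comp_apply id_apply)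

lemma conj_same:
  fixes \<alpha>1 \<beta>1 \<gamma>1 \<delta>1 \<alpha>2 \<beta>2 \<gamma>2 \<delta>2 :: complex
  assumes det1: "\<alpha>1*\<delta>1 - \<beta>1*\<gamma>1 = 1" and det2: "\<alpha>2*\<delta>2 - \<beta>2*\<gamma>2 = 1"
    and A: "\<alpha>2*\<delta>2 = \<alpha>1*\<delta>1" and B: "\<alpha>2^3*\<beta>2 = \<alpha>1^3*\<beta>1" and C: "\<gamma>2*\<delta>2^3 = \<gamma>1*\<delta>1^3"
  shows "\<exists>\<psi>. moebius \<psi> \<and> \<psi> \<circ> normal_form \<alpha>1 \<beta>1 \<gamma>1 \<delta>1 = normal_form \<alpha>2 \<beta>2 \<gamma>2 \<delta>2 \<circ> \<psi>"
proof -
  obtain l where l: "l \<noteq> 0" "\<alpha>2 = \<alpha>1*l" "\<beta>2*l^3 = \<beta>1" "\<gamma>2 = \<gamma>1*l^3" "\<delta>2*l = \<delta>1"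
    using scale_exists[OF det1 det2 A B C] by blast
  show ?thesis using conj_scale[OF l(1) det1 l(2-5)] moebius_scale[OF l(1)] by blast
qed

lemma nf_conj_exists:
  fixes \<alpha>1 \<beta>1 \<gamma>1 \<delta>1 \<alpha>2 \<beta>2 \<gamma>2 \<delta>2 :: complex
  assumes det1: "\<alpha>1*\<delta>1 - \<beta>1*\<gamma>1 = 1" and det2: "\<alpha>2*\<delta>2 - \<beta>2*\<gamma>2 = 1"
    and A: "\<alpha>2*\<delta>2 = \<alpha>1*\<delta>1" and S: "\<alpha>2^3*\<beta>2 + \<gamma>2*\<delta>2^3 = \<alpha>1^3*\<beta>1 + \<gamma>1*\<delta>1^3"
  shows "\<exists>\<psi>. moebius \<psi> \<and> \<psi> \<circ> normal_form \<alpha>1 \<beta>1 \<gamma>1 \<delta>1 = normal_form \<alpha>2 \<beta>2 \<gamma>2 \<delta>2 \<circ> \<psi>"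
proof -
  have P: "(\<alpha>1^3*\<beta>1)*(\<gamma>1*\<delta>1^3) = (\<alpha>2^3*\<beta>2)*(\<gamma>2*\<delta>2^3)"
    using BC_prod[OF det1] BC_prod[OF det2] A by simp
  from sym_pair[OF S[symmetric] P]
  show ?thesis
  proof
    assume "\<alpha>2^3*\<beta>2 = \<alpha>1^3*\<beta>1 \<and> \<gamma>2*\<delta>2^3 = \<gamma>1*\<delta>1^3"
    then show ?thesis using conj_same[OF det1 det2 A] by blast
  next
    assume h: "\<alpha>2^3*\<beta>2 = \<gamma>1*\<delta>1^3 \<and> \<gamma>2*\<delta>2^3 = \<alpha>1^3*\<beta>1"
    have det1': "\<delta>1*\<alpha>1 - \<gamma>1*\<beta>1 = 1" using det1 by (simp add: ac_simps)
    obtain \<psi> where p: "moebius \<psi>" "\<psi> \<circ> normal_form \<delta>1 \<gamma>1 \<beta>1 \<alpha>1 = normal_form \<alpha>2 \<beta>2 \<gamma>2 \<delta>2 \<circ> \<psi>"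
      using conj_same[OF det1' det2] A h by (auto simp: ac_simps)
    have sw: "mob 0 1 1 0 \<circ> normal_form \<alpha>1 \<beta>1 \<gamma>1 \<delta>1 = normal_form \<delta>1 \<gamma>1 \<beta>1 \<alpha>1 \<circ> mob 0 1 1 0"
      by (rule conj_swap) (simp add: det1)
    have swN: "\<And>x. mob 0 1 1 0 (normal_form \<alpha>1 \<beta>1 \<gamma>1 \<delta>1 x) = normal_form \<delta>1 \<gamma>1 \<beta>1 \<alpha>1 (mob 0 1 1 0 x)"
      using sw unfolding fun_eq_iff by simp
    have pp: "\<And>x. \<psi> (normal_form \<delta>1 \<gamma>1 \<beta>1 \<alpha>1 x) = normal_form \<alpha>2 \<beta>2 \<gamma>2 \<delta>2 (\<psi> x)"
      using p(2) unfolding fun_eq_iff by simp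
    have "(\<psi> \<circ> mob 0 1 1 0) \<circ> normal_form \<alpha>1 \<beta>1 \<gamma>1 \<delta>1 = normal_form \<alpha>2 \<beta>2 \<gamma>2 \<delta>2 \<circ> (\<psi> \<circ> mob 0 1 1 0)"
      by (simp add: fun_eq_iff swN pp)
    then show ?thesis using moebius_comp[OF p(1) moebius_sw] by blast
  qed
qed

lemma proj01: "proj 0 1 = Some 0" and proj10: "proj 1 0 = None"
  by (simp_all add: proj_def)

lemma nf_conj_inv:
  fixes \<alpha>1 \<beta>1 \<gamma>1 \<delta>1 \<alpha>2 \<beta>2 \<gamma>2 \<delta>2 :: complex
  assumes det1: "\<alpha>1*\<delta>1 - \<beta>1*\<gamma>1 = 1" and det2: "\<alpha>2*\<delta>2 - \<beta>2*\<gamma>2 = 1"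
    and m: "moebius \<psi>" and cj: "\<psi> \<circ> normal_form \<alpha>1 \<beta>1 \<gamma>1 \<delta>1 = normal_form \<alpha>2 \<beta>2 \<gamma>2 \<delta>2 \<circ> \<psi>"
  shows "\<alpha>2*\<delta>2 = \<alpha>1*\<delta>1 \<and> \<alpha>2^3*\<beta>2 + \<gamma>2*\<delta>2^3 = \<alpha>1^3*\<beta>1 + \<gamma>1*\<delta>1^3"
proof -
  obtain a b c d where abcd: "a*d - b*c \<noteq> 0" "\<psi> = mob a b c d" using m by (auto simp: moebius_mob)
  have bj: "bij \<psi>" using moebius_bij[OF m] .
  have c1: "crit (normal_form \<alpha>2 \<beta>2 \<gamma>2 \<delta>2) (\<psi> (Some 0))"
    by (rule crit_conj[OF bj cj]) (simp add: crit_nf det1)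
  have c2: "crit (normal_form \<alpha>2 \<beta>2 \<gamma>2 \<delta>2) (\<psi> None)"
    by (rule crit_conj[OF bj cj]) (simp add: crit_nf det1)
  have v0: "\<psi> (Some 0) = proj b d" unfolding abcd(2) proj01[symmetric] by (simp add: mob_proj')
  have vi: "\<psi> None = proj a c" unfolding abcd(2) proj10[symmetric] by (simp add: mob_proj')
  have ne: "\<psi> (Some 0) \<noteq> \<psi> None" using bj by (simp add: bij_def inj_eq)
  have s0: "proj b d = Some 0 \<or> proj b d = None" using c1 v0 by (simp add: crit_nf det2)
  have si: "proj a c = Some 0 \<or> proj a c = None" using c2 vi by (simp add: crit_nf det2)
  show ?thesis
  proof (cases "proj b d = Some 0")
    case True
    then have "proj a c = None" using si ne v0 vi by auto
    then have bcd: "b = 0" "c = 0" "d \<noteq> 0" using True by (auto simp: proj_def split: if_splits)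
    then have "a \<noteq> 0" using abcd(1) by auto
    then have r: "\<alpha>2*\<delta>2 = \<alpha>1*\<delta>1 \<and> \<alpha>2^3*\<beta>2 = \<alpha>1^3*\<beta>1 \<and> \<gamma>2*\<delta>2^3 = \<gamma>1*\<delta>1^3"
      using uniq_core[OF _ bcd(3) _ det1 det2] cj abcd(2) bcd by auto
    then show ?thesis by simp
  next
    case False
    then have "proj b d = None" using s0 by simp
    moreover have "proj a c = Some 0" using si ne v0 vi \<open>proj b d = None\<close> by auto
    ultimately have bcd: "d = 0" "a = 0" "c \<noteq> 0" by (auto simp: proj_def split: if_splits)
    then have b0: "b \<noteq> 0" using abcd(1) by auto
    have det1': "\<delta>1*\<alpha>1 - \<gamma>1*\<beta>1 = 1" using det1 by (simp add: ac_simps)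
    have sw: "mob 0 1 1 0 \<circ> normal_form \<alpha>1 \<beta>1 \<gamma>1 \<delta>1 = normal_form \<delta>1 \<gamma>1 \<beta>1 \<alpha>1 \<circ> mob 0 1 1 0"
      by (rule conj_swap) (simp add: det1)
    have swN: "\<And>x. mob 0 1 1 0 (normal_form \<alpha>1 \<beta>1 \<gamma>1 \<delta>1 x) = normal_form \<delta>1 \<gamma>1 \<beta>1 \<alpha>1 (mob 0 1 1 0 x)"
      using sw unfolding fun_eq_iff by simp
    have cjp: "\<And>x. \<psi> (normal_form \<alpha>1 \<beta>1 \<gamma>1 \<delta>1 x) = normal_form \<alpha>2 \<beta>2 \<gamma>2 \<delta>2 (\<psi> x)"
      using cj unfolding fun_eq_iff by simp
    have pc: "\<psi> \<circ> mob 0 1 1 0 = mob b 0 0 c"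
      unfolding abcd(2) using bcd by (subst mob_comp) simp_all
    have pcp: "\<And>x. \<psi> (mob 0 1 1 0 x) = mob b 0 0 c x" using pc unfolding fun_eq_iff by simp
    have n1: "\<And>x. normal_form \<delta>1 \<gamma>1 \<beta>1 \<alpha>1 x = mob 0 1 1 0 (normal_form \<alpha>1 \<beta>1 \<gamma>1 \<delta>1 (mob 0 1 1 0 x))"
      by (metis swN sw_swp)
    have "mob b 0 0 c \<circ> normal_form \<delta>1 \<gamma>1 \<beta>1 \<alpha>1 = normal_form \<alpha>2 \<beta>2 \<gamma>2 \<delta>2 \<circ> mob b 0 0 c"
      by (simp add: fun_eq_iff n1 pcp[symmetric] cjp sw_swp)
    from uniq_core[OF b0 bcd(3) this det1' det2]
    show ?thesis by (simp add: ac_simps)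
  qed
qed



definition Res2 :: "complex \<Rightarrow> complex \<Rightarrow> complex \<Rightarrow> complex \<Rightarrow> complex \<Rightarrow> complex \<Rightarrow> complex" where
  "Res2 p0 p1 p2 q0 q1 q2 = (p2*q0 - p0*q2)^2 - (p2*q1 - p1*q2)*(p1*q0 - p0*q1)"

lemma res_factor:
  fixes p2 r1 r2 q0 q1 q2 :: complex
  shows "Res2 (p2*r1*r2) (-p2*(r1+r2)) p2 q0 q1 q2 = p2^2 * (q0+q1*r1+q2*r1^2) * (q0+q1*r2+q2*r2^2)"
  unfolding Res2_def by algebra

lemma res_transform:
  fixes p0 p1 p2 q0 q1 q2 u1 v1 u2 v2 :: complex
  defines "a2 \<equiv> p2*u2^2 + p1*u2*v2 + p0*v2^2"
    and "a0 \<equiv> p2*u1^2 + p1*u1*v1 + p0*v1^2"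
    and "a1 \<equiv> 2*p2*u1*u2 + p1*(u1*v2+u2*v1) + 2*p0*v1*v2"
    and "b2 \<equiv> q2*u2^2 + q1*u2*v2 + q0*v2^2"
    and "b0 \<equiv> q2*u1^2 + q1*u1*v1 + q0*v1^2"
    and "b1 \<equiv> 2*q2*u1*u2 + q1*(u1*v2+u2*v1) + 2*q0*v1*v2"
  shows "Res2 a0 a1 a2 b0 b1 b2 = (u2*v1 - u1*v2)^4 * Res2 p0 p1 p2 q0 q1 q2"
    and "a2*b1 - a1*b2 = (u2*v1 - u1*v2) * ((p2*q1-p1*q2)*u2^2 + 2*(p2*q0-p0*q2)*u2*v2 + (p1*q0-p0*q1)*v2^2)"
    and "a1*b0 - a0*b1 = (u2*v1 - u1*v2) * ((p2*q1-p1*q2)*u1^2 + 2*(p2*q0-p0*q2)*u1*v1 + (p1*q0-p0*q1)*v1^2)"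
  unfolding Res2_def assms by algebra+



lemma quad_factor:
  fixes a b c :: complex
  assumes "a \<noteq> 0"
  shows "\<exists>r1 r2. b = -a*(r1+r2) \<and> c = a*r1*r2"
proof -
  define s where "s = csqrt (b^2 - 4*a*c)"
  have s2: "s^2 = b^2 - 4*a*c" by (simp add: s_def)
  define r1 where "r1 = (-b+s)/(2*a)"
  define r2 where "r2 = (-b-s)/(2*a)"
  have "b = -a*(r1+r2)" using assms by (simp add: r1_def r2_def field_simps)
  moreover have "c = a*r1*r2"
  proof -
    have "a*r1*r2 = (b^2 - s^2)/(4*a)" using assms by (simp add: r1_def r2_def field_simps power2_eq_square)
    also have "\<dots> = c" using assms by (simp add: s2 field_simps)
    finally show ?thesis by simp
  qed
  ultimately show ?thesis by blast
qed

lemma res_nz_aux: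
  fixes p q :: "complex poly"
  assumes dp: "degree p \<le> 2" and dq: "degree q \<le> 2" and p2: "coeff p 2 \<noteq> 0"
    and nc: "\<forall>z. poly p z \<noteq> 0 \<or> poly q z \<noteq> 0"
  shows "Res2 (coeff p 0) (coeff p 1) (coeff p 2) (coeff q 0) (coeff q 1) (coeff q 2) \<noteq> 0"
proof -
  obtain r1 r2 where r: "coeff p 1 = -coeff p 2*(r1+r2)" "coeff p 0 = coeff p 2*r1*r2"
    using quad_factor[OF p2] by blast
  have pr: "poly p r1 = 0" "poly p r2 = 0"
    unfolding poly2[OF dp] r by (simp_all add: algebra_simps power2_eq_square)
  have qr: "poly q r1 \<noteq> 0" "poly q r2 \<noteq> 0" using nc pr by auto
  have "Res2 (coeff p 0) (coeff p 1) (coeff p 2) (coeff q 0) (coeff q 1) (coeff q 2)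
     = coeff p 2^2 * poly q r1 * poly q r2"
    unfolding r poly2[OF dq] by (rule res_factor)
  then show ?thesis using qr p2 by simp
qed

lemma res_sym: "Res2 p0 p1 p2 q0 q1 q2 = Res2 q0 q1 q2 p0 p1 p2"
  unfolding Res2_def by algebra

lemma res_nz:
  fixes p q :: "complex poly"
  assumes "admissible p q 2"
  shows "Res2 (coeff p 0) (coeff p 1) (coeff p 2) (coeff q 0) (coeff q 1) (coeff q 2) \<noteq> 0"
proof -
  have a: "degree p \<le> 2" "degree q \<le> 2" "coeff p 2 \<noteq> 0 \<or> coeff q 2 \<noteq> 0" "\<forall>z. poly p z \<noteq> 0 \<or> poly q z \<noteq> 0"
    using assms by (auto simp: admissible_def)
  show ?thesis
  proof (cases "coeff p 2 = 0")
    case False then show ?thesis using res_nz_aux[OF a(1,2) False a(4)] by simp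
  next
    case True
    then have "coeff q 2 \<noteq> 0" using a(3) by simp
    moreover have "\<forall>z. poly q z \<noteq> 0 \<or> poly p z \<noteq> 0" using a(4) by blast
    ultimately show ?thesis using res_nz_aux[OF a(2,1)] res_sym by metis
  qed
qed

lemma W_roots:
  fixes A B C :: complex
  assumes "B^2 - A*C \<noteq> 0"
  shows "\<exists>u1 v1 u2 v2. A*u1^2 + 2*B*u1*v1 + C*v1^2 = 0 \<and> A*u2^2 + 2*B*u2*v2 + C*v2^2 = 0 \<and> u2*v1 - u1*v2 \<noteq> 0"
proof (cases "A = 0")
  case True
  then have B: "B \<noteq> 0" using assms by auto
  show ?thesis
    by (rule exI[of _ "-C"], rule exI[of _ "2*B"], rule exI[of _ 1], rule exI[of _ 0])
      (use True B in \<open>simp add: algebra_simps power2_eq_square\<close>)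
next
  case False
  define s where "s = csqrt (B^2 - A*C)"
  have s2: "s^2 = B^2 - A*C" by (simp add: s_def)
  have s0: "s \<noteq> 0" using s2 assms by auto
  have r1: "A*(-B+s)^2 + 2*B*(-B+s)*A + C*A^2 = A*(s^2 - (B^2 - A*C))" by (simp add: algebra_simps power2_eq_square)
  have r2: "A*(-B-s)^2 + 2*B*(-B-s)*A + C*A^2 = A*(s^2 - (B^2 - A*C))" by (simp add: algebra_simps power2_eq_square)
  have d: "(-B-s)*A - (-B+s)*A = -2*s*A" by (simp add: algebra_simps)
  show ?thesis
    by (rule exI[of _ "-B+s"], rule exI[of _ A], rule exI[of _ "-B-s"], rule exI[of _ A])
      (use r1 r2 s2 d s0 False in simp)
qed

lemma hP_poly:
  fixes r :: "complex poly"
  assumes "degree r \<le> 2" "y \<noteq> 0"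
  shows "hP r x y = y^2 * poly r (x/y)"
  using assms by (simp add: poly2 hP_def field_simps power2_eq_square)

lemma adm_nz:
  assumes "admissible p q 2" "x \<noteq> 0 \<or> y \<noteq> 0"
  shows "hP p x y \<noteq> 0 \<or> hP q x y \<noteq> 0"
proof (cases "y = 0")
  case True
  then show ?thesis using assms by (auto simp: hP_def admissible_def)
next
  case False
  then show ?thesis using assms hP_poly[of p y x] hP_poly[of q y x] by (auto simp: admissible_def)
qed



lemma exists_AS:
  assumes "f \<in> Rat2"
  shows "\<exists>a s. AS_value f a s"
proof -
  obtain p q where f: "f = rat_map p q 2" and adm: "admissible p q 2" using assms by (auto simp: Rat2_def)
  have dp: "degree p \<le> 2" and dq: "degree q \<le> 2" using adm by (auto simp: admissible_def)
  define p0 where "p0 = coeff p 0"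
  define p1 where "p1 = coeff p 1"
  define p2 where "p2 = coeff p 2"
  define q0 where "q0 = coeff q 0"
  define q1 where "q1 = coeff q 1"
  define q2 where "q2 = coeff q 2"
  have R: "Res2 p0 p1 p2 q0 q1 q2 \<noteq> 0" using res_nz[OF adm] by (simp add: p0_def p1_def p2_def q0_def q1_def q2_def)
  have "(p2*q0-p0*q2)^2 - (p2*q1-p1*q2)*(p1*q0-p0*q1) \<noteq> 0" using R by (simp add: Res2_def)
  then obtain u1 v1 u2 v2 where
    w1: "(p2*q1-p1*q2)*u1^2 + 2*(p2*q0-p0*q2)*u1*v1 + (p1*q0-p0*q1)*v1^2 = 0" and
    w2: "(p2*q1-p1*q2)*u2^2 + 2*(p2*q0-p0*q2)*u2*v2 + (p1*q0-p0*q1)*v2^2 = 0" and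
    dS: "u2*v1 - u1*v2 \<noteq> 0"
    using W_roots[of "p2*q0-p0*q2" "p2*q1-p1*q2" "p1*q0-p0*q1"] by (auto simp: algebra_simps)
  define a2 where "a2 = p2*u2^2 + p1*u2*v2 + p0*v2^2"
  define a0 where "a0 = p2*u1^2 + p1*u1*v1 + p0*v1^2"
  define a1 where "a1 = 2*p2*u1*u2 + p1*(u1*v2+u2*v1) + 2*p0*v1*v2"
  define b2 where "b2 = q2*u2^2 + q1*u2*v2 + q0*v2^2"
  define b0 where "b0 = q2*u1^2 + q1*u1*v1 + q0*v1^2"
  define b1 where "b1 = 2*q2*u1*u2 + q1*(u1*v2+u2*v1) + 2*q0*v1*v2"
  define d where "d = u2*v1 - u1*v2"
  have t1: "a2*b1 - a1*b2 = 0" unfolding a2_def a1_def b2_def b1_def res_transform(2) w2 by simp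
  have t2: "a1*b0 - a0*b1 = 0" unfolding a0_def a1_def b0_def b1_def res_transform(3) w1 by simp
  have "Res2 a0 a1 a2 b0 b1 b2 = d^4 * Res2 p0 p1 p2 q0 q1 q2"
    unfolding a0_def a1_def a2_def b0_def b1_def b2_def d_def by (rule res_transform(1))
  moreover have "Res2 a0 a1 a2 b0 b1 b2 = (a2*b0 - a0*b2)^2"
    using t1 t2 by (simp add: Res2_def)
  moreover have "d^4 * Res2 p0 p1 p2 q0 q1 q2 \<noteq> 0" using R dS by (simp add: d_def)
  ultimately have "(a2*b0 - a0*b2)^2 \<noteq> 0" by simp
  then have dT: "a2*b0 - a0*b2 \<noteq> 0" by simp
  have a1b1: "a1 = 0 \<and> b1 = 0"
  proof (rule ccontr)
    assume "\<not> ?thesis"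
    then have "a1 \<noteq> 0 \<or> b1 \<noteq> 0" by auto
    from nz_vec[of b2 "-a0" "-a2" b0, OF _ this] dT t1 t2
    show False by (simp add: algebra_simps)
  qed
  define N11 where "N11 = v1*a2 - u1*b2"
  define N12 where "N12 = v1*a0 - u1*b0"
  define N21 where "N21 = -v2*a2 + u2*b2"
  define N22 where "N22 = -v2*a0 + u2*b0"
  have dN: "N11*N22 - N12*N21 = d*(a2*b0 - a0*b2)"
    unfolding N11_def N12_def N21_def N22_def d_def by algebra
  define r where "r = csqrt (N11*N22 - N12*N21)"
  have r2: "r^2 = N11*N22 - N12*N21" by (simp add: r_def)
  have r0: "r \<noteq> 0" using r2 dN dT dS by (auto simp: d_def)
  define \<alpha> where "\<alpha> = N11/r"
  define \<beta> where "\<beta> = N12/r"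
  define \<gamma> where "\<gamma> = N21/r"
  define \<delta> where "\<delta> = N22/r"
  have det: "\<alpha>*\<delta> - \<beta>*\<gamma> = 1"
    using r0 r2 by (simp add: \<alpha>_def \<beta>_def \<gamma>_def \<delta>_def field_simps power2_eq_square)
  define \<phi> where "\<phi> = mob v1 (-u1) (-v2) u2"
  have dphi: "v1*u2 - (-u1)*(-v2) \<noteq> 0" using dS by (simp add: algebra_simps)
  have m: "moebius \<phi>" unfolding \<phi>_def moebius_mob using dphi by blast
  have key: "\<phi> \<circ> f = normal_form \<alpha> \<beta> \<gamma> \<delta> \<circ> \<phi>"
  proof (rule sphere_ext)
    fix x y :: complex assume nz: "x \<noteq> 0 \<or> y \<noteq> 0"
    define P where "P = hP p x y"
    define Q where "Q = hP q x y"
    define X where "X = v1*x + (-u1)*y"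
    define Y where "Y = (-v2)*x + u2*y"
    have nzPQ: "P \<noteq> 0 \<or> Q \<noteq> 0" using adm_nz[OF adm nz] by (simp add: P_def Q_def)
    have nzXY: "X \<noteq> 0 \<or> Y \<noteq> 0" using nz_vec[OF dphi nz] by (simp add: X_def Y_def)
    have kP: "d^2 * P = a2*X^2 + a1*X*Y + a0*Y^2"
      unfolding P_def hP_def a2_def a1_def a0_def X_def Y_def d_def p0_def[symmetric] p1_def[symmetric] p2_def[symmetric]
      by algebra
    have kQ: "d^2 * Q = b2*X^2 + b1*X*Y + b0*Y^2"
      unfolding Q_def hP_def b2_def b1_def b0_def X_def Y_def d_def q0_def[symmetric] q1_def[symmetric] q2_def[symmetric]
      by algebra
    have d0: "d \<noteq> 0" using dS by (simp add: d_def)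
    have e1: "v1*P + (-u1)*Q = (r/d^2) * (\<alpha>*X^2 + \<beta>*Y^2)"
    proof -
      have "d^2*(v1*P + (-u1)*Q) = v1*(d^2*P) - u1*(d^2*Q)" by (simp add: algebra_simps)
      also have "\<dots> = N11*X^2 + N12*Y^2" unfolding kP kQ using a1b1 by (simp add: N11_def N12_def algebra_simps)
      also have "\<dots> = r*(\<alpha>*X^2 + \<beta>*Y^2)" using r0 by (simp add: \<alpha>_def \<beta>_def field_simps)
      finally show ?thesis using d0 by (simp add: field_simps)
    qed
    have e2: "(-v2)*P + u2*Q = (r/d^2) * (\<gamma>*X^2 + \<delta>*Y^2)"
    proof -
      have "d^2*((-v2)*P + u2*Q) = -v2*(d^2*P) + u2*(d^2*Q)" by (simp add: algebra_simps)
      also have "\<dots> = N21*X^2 + N22*Y^2" unfolding kP kQ using a1b1 by (simp add: N21_def N22_def algebra_simps)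
      also have "\<dots> = r*(\<gamma>*X^2 + \<delta>*Y^2)" using r0 by (simp add: \<gamma>_def \<delta>_def field_simps)
      finally show ?thesis using d0 by (simp add: field_simps)
    qed
    have lhs: "(\<phi> \<circ> f) (proj x y) = proj (v1*P + (-u1)*Q) ((-v2)*P + u2*Q)"
      using nz nzPQ by (simp add: f \<phi>_def rat2_proj[OF dp dq nz] P_def Q_def mob_proj')
    have rhs: "(normal_form \<alpha> \<beta> \<gamma> \<delta> \<circ> \<phi>) (proj x y) = proj (\<alpha>*X^2 + \<beta>*Y^2) (\<gamma>*X^2 + \<delta>*Y^2)"
      using nz nzXY by (simp add: \<phi>_def mob_proj' nf_proj X_def Y_def)
    have rd: "r/d^2 \<noteq> 0" using r0 d0 by simp
    show "(\<phi> \<circ> f) (proj x y) = (normal_form \<alpha> \<beta> \<gamma> \<delta> \<circ> \<phi>) (proj x y)"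
      unfolding lhs rhs e1 e2 by (rule proj_scale[OF rd])
  qed
  show ?thesis unfolding AS_value_def using m det key by blast
qed



lemma inv_conj:
  assumes "\<phi>' \<circ> \<phi> = id" "\<phi> \<circ> \<phi>' = id" "\<phi> \<circ> f = g \<circ> \<phi>"
  shows "\<phi>' (g x) = f (\<phi>' x)"
proof -
  have "g x = g (\<phi> (\<phi>' x))" using assms(2) by (metis comp_apply id_apply)
  also have "\<dots> = \<phi> (f (\<phi>' x))" using assms(3) by (metis comp_apply)
  finally show ?thesis using assms(1) by (metis comp_apply id_apply)
qed

lemma AS_unique:
  assumes "AS_value f a1 s1" "AS_value f a2 s2"
  shows "a1 = a2 \<and> s1 = s2"
proof -
  obtain \<phi>1 \<alpha>1 \<beta>1 \<gamma>1 \<delta>1 where h1: "moebius \<phi>1" "\<alpha>1*\<delta>1 - \<beta>1*\<gamma>1 = 1"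
    "\<phi>1 \<circ> f = normal_form \<alpha>1 \<beta>1 \<gamma>1 \<delta>1 \<circ> \<phi>1" "a1 = \<alpha>1*\<delta>1" "s1 = \<alpha>1^3*\<beta>1 + \<gamma>1*\<delta>1^3"
    using assms(1) unfolding AS_value_def by blast
  obtain \<phi>2 \<alpha>2 \<beta>2 \<gamma>2 \<delta>2 where h2: "moebius \<phi>2" "\<alpha>2*\<delta>2 - \<beta>2*\<gamma>2 = 1"
    "\<phi>2 \<circ> f = normal_form \<alpha>2 \<beta>2 \<gamma>2 \<delta>2 \<circ> \<phi>2" "a2 = \<alpha>2*\<delta>2" "s2 = \<alpha>2^3*\<beta>2 + \<gamma>2*\<delta>2^3"
    using assms(2) unfolding AS_value_def by blast
  obtain \<phi>1' where i: "moebius \<phi>1'" "\<phi>1' \<circ> \<phi>1 = id" "\<phi>1 \<circ> \<phi>1' = id" using moebius_inv[OF h1(1)] by blast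
  have c: "(\<phi>2 \<circ> \<phi>1') \<circ> normal_form \<alpha>1 \<beta>1 \<gamma>1 \<delta>1 = normal_form \<alpha>2 \<beta>2 \<gamma>2 \<delta>2 \<circ> (\<phi>2 \<circ> \<phi>1')"
  proof
    fix x
    have "\<phi>1' (normal_form \<alpha>1 \<beta>1 \<gamma>1 \<delta>1 x) = f (\<phi>1' x)" by (rule inv_conj[OF i(2,3) h1(3)])
    then show "((\<phi>2 \<circ> \<phi>1') \<circ> normal_form \<alpha>1 \<beta>1 \<gamma>1 \<delta>1) x = (normal_form \<alpha>2 \<beta>2 \<gamma>2 \<delta>2 \<circ> (\<phi>2 \<circ> \<phi>1')) x"
      using h2(3) by (metis comp_apply)
  qed
  from nf_conj_inv[OF h1(2) h2(2) moebius_comp[OF h2(1) i(1)] c] h1(4,5) h2(4,5)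
  show ?thesis by simp
qed

lemma mconj_AS:
  assumes "(f, g) \<in> mconj"
  shows "AS_value f a s \<longleftrightarrow> AS_value g a s"
proof -
  obtain \<phi> where m: "moebius \<phi>" and c: "g \<circ> \<phi> = \<phi> \<circ> f" using assms by (auto simp: mconj_def)
  obtain \<phi>' where i: "moebius \<phi>'" "\<phi>' \<circ> \<phi> = id" "\<phi> \<circ> \<phi>' = id" using moebius_inv[OF m] by blast
  show ?thesis
  proof
    assume "AS_value f a s"
    then obtain \<psi> \<alpha> \<beta> \<gamma> \<delta> where h: "moebius \<psi>" "\<alpha>*\<delta> - \<beta>*\<gamma> = 1"
      "\<psi> \<circ> f = normal_form \<alpha> \<beta> \<gamma> \<delta> \<circ> \<psi>" "a = \<alpha>*\<delta>" "s = \<alpha>^3*\<beta> + \<gamma>*\<delta>^3"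
      unfolding AS_value_def by blast
    have "(\<psi> \<circ> \<phi>') \<circ> g = normal_form \<alpha> \<beta> \<gamma> \<delta> \<circ> (\<psi> \<circ> \<phi>')"
    proof
      fix x
      have "\<phi>' (g x) = f (\<phi>' x)" by (rule inv_conj[OF i(2,3) c[symmetric]])
      then show "((\<psi> \<circ> \<phi>') \<circ> g) x = (normal_form \<alpha> \<beta> \<gamma> \<delta> \<circ> (\<psi> \<circ> \<phi>')) x"
        using h(3) by (metis comp_apply)
    qed
    then show "AS_value g a s" unfolding AS_value_def using moebius_comp[OF h(1) i(1)] h(2,4,5) by blast
  next
    assume "AS_value g a s"
    then obtain \<psi> \<alpha> \<beta> \<gamma> \<delta> where h: "moebius \<psi>" "\<alpha>*\<delta> - \<beta>*\<gamma> = 1"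
      "\<psi> \<circ> g = normal_form \<alpha> \<beta> \<gamma> \<delta> \<circ> \<psi>" "a = \<alpha>*\<delta>" "s = \<alpha>^3*\<beta> + \<gamma>*\<delta>^3"
      unfolding AS_value_def by blast
    have "(\<psi> \<circ> \<phi>) \<circ> f = normal_form \<alpha> \<beta> \<gamma> \<delta> \<circ> (\<psi> \<circ> \<phi>)"
    proof
      fix x
      have "g (\<phi> x) = \<phi> (f x)" using c by (metis comp_apply)
      then show "((\<psi> \<circ> \<phi>) \<circ> f) x = (normal_form \<alpha> \<beta> \<gamma> \<delta> \<circ> (\<psi> \<circ> \<phi>)) x"
        using h(3) by (metis comp_apply)
    qed
    then show "AS_value f a s" unfolding AS_value_def using moebius_comp[OF h(1) m] h(2,4,5) by blast
  qed
qed

lemma equiv_mconj: "equiv Rat2 mconj"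
proof (rule equivI)
  show "mconj \<subseteq> Rat2 \<times> Rat2" by (auto simp: mconj_def)
next
  show "refl_on Rat2 mconj"
  proof (rule refl_onI)
    fix f assume "f \<in> Rat2"
    then show "(f, f) \<in> mconj" unfolding mconj_def using moebius_id by auto
  qed
next
  show "sym mconj"
  proof (rule symI)
    fix f g assume "(f, g) \<in> mconj"
    then obtain \<phi> where fg: "f \<in> Rat2" "g \<in> Rat2" and m: "moebius \<phi>" and c: "g \<circ> \<phi> = \<phi> \<circ> f"
      by (auto simp: mconj_def)
    obtain \<phi>' where i: "moebius \<phi>'" "\<phi>' \<circ> \<phi> = id" "\<phi> \<circ> \<phi>' = id" using moebius_inv[OF m] by blast
    have "f \<circ> \<phi>' = \<phi>' \<circ> g"
    proof
      fix x show "(f \<circ> \<phi>') x = (\<phi>' \<circ> g) x" using inv_conj[OF i(2,3) c[symmetric]] by simp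
    qed
    then show "(g, f) \<in> mconj" unfolding mconj_def using fg i(1) by auto
  qed
next
  show "trans mconj"
  proof (rule transI)
    fix f g h assume "(f, g) \<in> mconj" "(g, h) \<in> mconj"
    then obtain \<phi> \<psi> where fg: "f \<in> Rat2" "h \<in> Rat2" and m: "moebius \<phi>" "moebius \<psi>"
      and c: "g \<circ> \<phi> = \<phi> \<circ> f" "h \<circ> \<psi> = \<psi> \<circ> g" by (auto simp: mconj_def)
    have "h \<circ> (\<psi> \<circ> \<phi>) = (\<psi> \<circ> \<phi>) \<circ> f"
    proof
      fix x show "(h \<circ> (\<psi> \<circ> \<phi>)) x = ((\<psi> \<circ> \<phi>) \<circ> f) x" using c by (metis comp_apply)
    qed
    then show "(f, h) \<in> mconj" unfolding mconj_def using fg moebius_comp[OF m(2,1)] by auto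
  qed
qed

lemma AS_conj:
  assumes f: "f \<in> Rat2" and g: "g \<in> Rat2" and af: "AS_value f a s" and ag: "AS_value g a s"
  shows "(f, g) \<in> mconj"
proof -
  obtain \<phi>1 \<alpha>1 \<beta>1 \<gamma>1 \<delta>1 where h1: "moebius \<phi>1" "\<alpha>1*\<delta>1 - \<beta>1*\<gamma>1 = 1"
    "\<phi>1 \<circ> f = normal_form \<alpha>1 \<beta>1 \<gamma>1 \<delta>1 \<circ> \<phi>1" "a = \<alpha>1*\<delta>1" "s = \<alpha>1^3*\<beta>1 + \<gamma>1*\<delta>1^3"
    using af unfolding AS_value_def by blast
  obtain \<phi>2 \<alpha>2 \<beta>2 \<gamma>2 \<delta>2 where h2: "moebius \<phi>2" "\<alpha>2*\<delta>2 - \<beta>2*\<gamma>2 = 1"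
    "\<phi>2 \<circ> g = normal_form \<alpha>2 \<beta>2 \<gamma>2 \<delta>2 \<circ> \<phi>2" "a = \<alpha>2*\<delta>2" "s = \<alpha>2^3*\<beta>2 + \<gamma>2*\<delta>2^3"
    using ag unfolding AS_value_def by blast
  obtain \<psi> where p: "moebius \<psi>" "\<psi> \<circ> normal_form \<alpha>1 \<beta>1 \<gamma>1 \<delta>1 = normal_form \<alpha>2 \<beta>2 \<gamma>2 \<delta>2 \<circ> \<psi>"
    using nf_conj_exists[OF h1(2) h2(2)] h1(4,5) h2(4,5) by auto
  obtain \<phi>2' where i: "moebius \<phi>2'" "\<phi>2' \<circ> \<phi>2 = id" "\<phi>2 \<circ> \<phi>2' = id" using moebius_inv[OF h2(1)] by blast
  define \<chi> where "\<chi> = \<phi>2' \<circ> \<psi> \<circ> \<phi>1"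
  have "g \<circ> \<chi> = \<chi> \<circ> f"
  proof
    fix x
    have e1: "\<phi>2' (normal_form \<alpha>2 \<beta>2 \<gamma>2 \<delta>2 y) = g (\<phi>2' y)" for y by (rule inv_conj[OF i(2,3) h2(3)])
    have e2: "\<psi> (normal_form \<alpha>1 \<beta>1 \<gamma>1 \<delta>1 y) = normal_form \<alpha>2 \<beta>2 \<gamma>2 \<delta>2 (\<psi> y)" for y using p(2) by (metis comp_apply)
    have e3: "\<phi>1 (f x) = normal_form \<alpha>1 \<beta>1 \<gamma>1 \<delta>1 (\<phi>1 x)" using h1(3) by (metis comp_apply)
    show "(g \<circ> \<chi>) x = (\<chi> \<circ> f) x" by (simp add: \<chi>_def e1[symmetric] e2[symmetric] e3)
  qed
  moreover have "moebius \<chi>" unfolding \<chi>_def by (intro moebius_comp i(1) p(1) h1(1))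
  ultimately show ?thesis unfolding mconj_def using f g by auto
qed

lemma nf_Rat2:
  assumes "\<alpha>*\<delta> - \<beta>*\<gamma> = 1"
  shows "normal_form \<alpha> \<beta> \<gamma> \<delta> \<in> Rat2"
proof -
  have "admissible [:\<beta>, 0, \<alpha>:] [:\<delta>, 0, \<gamma>:] 2"
    unfolding admissible_def
  proof (intro conjI allI)
    show "degree [:\<beta>, 0, \<alpha>:] \<le> 2" "degree [:\<delta>, 0, \<gamma>:] \<le> 2" by (auto simp: degree_pCons_eq_if)
    show "coeff [:\<beta>, 0, \<alpha>:] 2 \<noteq> 0 \<or> coeff [:\<delta>, 0, \<gamma>:] 2 \<noteq> 0" using assms by auto
  next
    fix z
    have "\<alpha>*(\<delta> + z*(z*\<gamma>)) - \<gamma>*(\<beta> + z*(z*\<alpha>)) = \<alpha>*\<delta> - \<beta>*\<gamma>" by (simp add: algebra_simps)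
    then show "poly [:\<beta>, 0, \<alpha>:] z \<noteq> 0 \<or> poly [:\<delta>, 0, \<gamma>:] z \<noteq> 0" using assms by auto
  qed
  then show ?thesis unfolding Rat2_def normal_form_def by blast
qed

lemma surj_AS: fixes a s :: complex shows "\<exists>\<alpha> \<beta> \<gamma> \<delta>. \<alpha>*\<delta> - \<beta>*\<gamma> = 1 \<and> a = \<alpha>*\<delta> \<and> s = \<alpha>^3*\<beta> + \<gamma>*\<delta>^3"
proof (cases "a = 0")
  case False
  have a3: "a^3 \<noteq> 0" using False by simp
  obtain r1 r2 where r: "-s = -(a^3)*(r1+r2)" "a - 1 = a^3*r1*r2" using quad_factor[OF a3] by blast
  define \<gamma> where "\<gamma> = r1"
  define \<beta> where "\<beta> = s - \<gamma>*a^3"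
  have se: "s = a^3*(r1+r2)" using r(1) by simp
  have "\<beta> = a^3*r2" by (simp add: \<beta>_def \<gamma>_def se algebra_simps)
  then have "\<beta>*\<gamma> = a^3*r1*r2" by (simp add: \<gamma>_def)
  then have "\<beta>*\<gamma> = a - 1" using r(2) by simp
  then show ?thesis
    by (intro exI[of _ 1] exI[of _ \<beta>] exI[of _ \<gamma>] exI[of _ a]) (simp add: \<beta>_def algebra_simps)
next
  case True
  show ?thesis
  proof (cases "s = 0")
    case True
    then show ?thesis using \<open>a = 0\<close> by (intro exI[of _ 0] exI[of _ 1] exI[of _ "-1"] exI[of _ 0]) simp
  next
    case False
    then show ?thesis using \<open>a = 0\<close> by (intro exI[of _ 0] exI[of _ "-1/s"] exI[of _ s] exI[of _ 1]) simp
  qed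
qed

theorem mainTheorem11:
  shows "\<exists>\<Phi> :: (complex option \<Rightarrow> complex option) set \<Rightarrow> complex \<times> complex.
           bij_betw \<Phi> M2 UNIV \<and>
           (\<forall>f \<in> Rat2. \<forall>a s. AS_value f a s \<longleftrightarrow> \<Phi> (mconj `` {f}) = (a, s))"
proof -
  define \<Phi> :: "(complex option \<Rightarrow> complex option) set \<Rightarrow> complex \<times> complex" where
    "\<Phi> X = (THE p. \<exists>f\<in>X. AS_value f (fst p) (snd p))" for X
  have eq: "equiv Rat2 mconj" by (rule equiv_mconj)
  have cls: "(\<exists>g\<in>mconj``{f}. AS_value g a s) \<longleftrightarrow> AS_value f a s" if f: "f \<in> Rat2" for f a s
  proof
    assume "\<exists>g\<in>mconj``{f}. AS_value g a s"
    then obtain g where "(f, g) \<in> mconj" "AS_value g a s" by auto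
    then show "AS_value f a s" using mconj_AS by blast
  next
    assume "AS_value f a s"
    moreover have "f \<in> mconj``{f}" by (rule equiv_class_self[OF eq f])
    ultimately show "\<exists>g\<in>mconj``{f}. AS_value g a s" by blast
  qed
  have key: "AS_value f a s \<longleftrightarrow> \<Phi> (mconj``{f}) = (a, s)" if f: "f \<in> Rat2" for f a s
  proof -
    obtain a0 s0 where as0: "AS_value f a0 s0" using exists_AS[OF f] by blast
    have "\<Phi> (mconj``{f}) = (a0, s0)"
      unfolding \<Phi>_def
    proof (rule the_equality)
      show "\<exists>g\<in>mconj``{f}. AS_value g (fst (a0, s0)) (snd (a0, s0))" using cls[OF f] as0 by simp
    next
      fix p assume "\<exists>g\<in>mconj``{f}. AS_value g (fst p) (snd p)"
      then have "AS_value f (fst p) (snd p)" using cls[OF f] by blast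
      then show "p = (a0, s0)" using AS_unique[OF _ as0] by (cases p) auto
    qed
    then show ?thesis using as0 AS_unique by auto
  qed
  have inj: "inj_on \<Phi> M2"
  proof (rule inj_onI)
    fix X Y assume X: "X \<in> M2" and Y: "Y \<in> M2" and e: "\<Phi> X = \<Phi> Y"
    obtain f where f: "f \<in> Rat2" "X = mconj``{f}" using X unfolding M2_def by (auto elim: quotientE)
    obtain g where g: "g \<in> Rat2" "Y = mconj``{g}" using Y unfolding M2_def by (auto elim: quotientE)
    obtain a s where "\<Phi> X = (a, s)" by (cases "\<Phi> X")
    then have "AS_value f a s" "AS_value g a s" using key f g e by auto
    then have "(f, g) \<in> mconj" using AS_conj f g by blast
    then show "X = Y" using f g eq by (simp add: equiv_class_eq)
  qed
  have surj: "\<Phi> ` M2 = UNIV"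
  proof (rule set_eqI, rule iffI)
    fix p :: "complex \<times> complex" assume "p \<in> UNIV"
    obtain a s where p: "p = (a, s)" by (cases p)
    obtain \<alpha> \<beta> \<gamma> \<delta> where h: "\<alpha>*\<delta> - \<beta>*\<gamma> = 1" "a = \<alpha>*\<delta>" "s = \<alpha>^3*\<beta> + \<gamma>*\<delta>^3"
      using surj_AS by blast
    define f where "f = normal_form \<alpha> \<beta> \<gamma> \<delta>"
    have f: "f \<in> Rat2" unfolding f_def by (rule nf_Rat2[OF h(1)])
    have "AS_value f a s" unfolding AS_value_def f_def using moebius_id h by fastforce
    then have "\<Phi> (mconj``{f}) = p" using key[OF f] p by simp
    moreover have "mconj``{f} \<in> M2" unfolding M2_def using f by (rule quotientI)
    ultimately show "p \<in> \<Phi> ` M2" by blast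
  qed simp
  show ?thesis using inj surj key unfolding bij_betw_def by blast
qed

end
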